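(* Let $p$ be a prime and let $A=\mathbb{Z}/(p^{\alpha_1})\times\cdots\times\mathbb{Z}/(p^{\alpha_m})$ for integers $1\le\alpha_1\le\cdots\le\alpha_m$. Then for every automorphism $M\in\operatorname{Aut}(A)$ whose order is a power of $p$, there exists a group endomorphism $N$ of $A$ such that $(M-\operatorname{Id})^m=pN$.
   Context: Here $M-\operatorname{Id}$ is the endomorphism $a\mapsto M(a)-a$ of the abelian group $A$, powers denote composition, and $pN$ is the endomorphism $a\mapsto pN(a)$. *)

theory Defs
  imports "HOL-Algebra.Group" "HOL-Computational_Algebra.Primes"
begin

text \<open>The abelian group Z/(p^alpha_0) x ... x Z/(p^alpha_(m-1)), with elements
  represented as integer sequences whose i-th entry lies in 0 ..< p^(alpha i) for i < m
  and is 0 for i >= m; the operation is componentwise addition modulo p^(alpha i).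
  It is written multiplicatively as an HOL-Algebra monoid record.\<close>

definition cyc_prod :: "nat \<Rightarrow> (nat \<Rightarrow> nat) \<Rightarrow> nat \<Rightarrow> (nat \<Rightarrow> int) monoid" where
  "cyc_prod p \<alpha> m =
     \<lparr> carrier = {a. (\<forall>i<m. 0 \<le> a i \<and> a i < int p ^ \<alpha> i) \<and> (\<forall>i\<ge>m. a i = 0)},
       monoid.mult = (\<lambda>a b i. if i < m then (a i + b i) mod (int p ^ \<alpha> i) else 0),
       one = (\<lambda>i. 0) \<rparr>"

end

theory Submission imports Defs "HOL-Computational_Algebra.Polynomial" "HOL-Algebra.Coset" begin

lemma binom_shift_ex: "\<exists>t. ((a::'a::comm_ring_1) + c) ^ n = a ^ n + c * t"
proof (induction n)
  case 0 then show ?case by (intro exI[of _ 0]) simp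
next
  case (Suc n)
  then obtain t where t: "(a + c) ^ n = a ^ n + c * t" by blast
  have "(a + c) ^ Suc n = a ^ Suc n + c * (a * t + a ^ n + c * t)"
    unfolding power_Suc t by (simp add: algebra_simps)
  then show ?case by blast
qed

lemma of_nat_dvd_of_nat': "m dvd n \<Longrightarrow> (of_nat m :: 'a::comm_semiring_1) dvd of_nat n"
  by (metis dvd_def of_nat_mult)

lemma frob_step:
  assumes "prime p"
  shows "\<exists>t. ((y::'a::comm_ring_1) - 1) ^ p + 1 = y ^ p + of_nat p * t"
proof -
  have p2: "p \<ge> 2" using assms prime_ge_2_nat by blast
  then obtain r where r: "p = Suc (Suc r)" by (metis add_2_eq_Suc le_Suc_ex)
  define F where "F k = of_nat (p choose k) * y ^ k * (-1 :: 'a) ^ (p - k)" for k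
  have "(y - 1) ^ p = (y + (-1)) ^ p" by simp
  also have "\<dots> = (\<Sum>k\<le>p. F k)" unfolding binomial_ring F_def ..
  also have "\<dots> = (\<Sum>k\<le>Suc r. F k) + F p" unfolding r by simp
  also have "(\<Sum>k\<le>Suc r. F k) = F 0 + (\<Sum>i\<le>r. F (Suc i))" by (rule sum.atMost_Suc_shift)
  finally have e: "(y - 1) ^ p = F 0 + (\<Sum>i\<le>r. F (Suc i)) + F p" .
  have "of_nat p dvd (\<Sum>i\<le>r. F (Suc i))"
  proof (rule dvd_sum)
    fix i assume "i \<in> {..r}"
    then have "Suc i < p" "Suc i \<noteq> 0" "p \<noteq> 0" using r by auto
    then have "p dvd (p choose Suc i)" using dvd_choose_prime assms by blast
    then have "(of_nat p :: 'a) dvd of_nat (p choose Suc i)" by (rule of_nat_dvd_of_nat')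
    then show "of_nat p dvd F (Suc i)" unfolding F_def by (simp add: mult.assoc)
  qed
  then obtain t1 where t1: "(\<Sum>i\<le>r. F (Suc i)) = of_nat p * t1" by (auto simp: dvd_def)
  have Fp: "F p = y ^ p" unfolding F_def by simp
  have F0: "F 0 = (-1) ^ p" unfolding F_def by simp
  have "\<exists>u. (-1 :: 'a) ^ p + 1 = of_nat p * u"
  proof (cases "p = 2")
    case True then show ?thesis by (intro exI[of _ 1]) simp
  next
    case False
    then have "odd p" using assms prime_odd_nat p2 by auto
    then show ?thesis by (intro exI[of _ 0]) simp
  qed
  then obtain u where u: "(-1 :: 'a) ^ p + 1 = of_nat p * u" by blast
  have "(y - 1) ^ p + 1 = y ^ p + of_nat p * (t1 + u)"
    unfolding e t1 Fp F0 using u by (simp add: algebra_simps)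
  then show ?thesis by blast
qed

lemma frob_pk:
  assumes "prime p"
  shows "\<exists>s. ((x::'a::comm_ring_1) - 1) ^ (p ^ k) + 1 = x ^ (p ^ k) + of_nat p * s"
proof (induction k)
  case 0 then show ?case by (intro exI[of _ 0]) simp
next
  case (Suc k)
  then obtain s where s: "(x - 1) ^ (p ^ k) = x ^ (p ^ k) - 1 + of_nat p * s"
    by (metis add_diff_cancel_right' diff_add_eq)
  obtain t1 where t1: "(x ^ (p ^ k) - 1 + of_nat p * s) ^ p = (x ^ (p ^ k) - 1) ^ p + of_nat p * s * t1"
    using binom_shift_ex[of "x ^ (p ^ k) - 1" "of_nat p * s" p] by blast
  obtain t2 where t2: "(x ^ (p ^ k) - 1) ^ p + 1 = (x ^ (p ^ k)) ^ p + of_nat p * t2"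
    using frob_step[OF assms] by blast
  have "(x - 1) ^ (p ^ Suc k) + 1 = ((x - 1) ^ (p ^ k)) ^ p + 1"
    by (simp only: power_Suc2 power_mult)
  also have "\<dots> = (x ^ (p ^ k)) ^ p + of_nat p * (t2 + s * t1)"
    unfolding s t1 using t2 by (simp add: algebra_simps)
  also have "(x ^ (p ^ k)) ^ p = x ^ (p ^ Suc k)" by (simp only: power_Suc2 power_mult)
  finally show ?case by blast
qed


locale cp =
  fixes p m :: nat and \<alpha> :: "nat \<Rightarrow> nat"
  assumes prime: "prime p" and pos: "\<forall>i<m. 1 \<le> \<alpha> i"
begin

abbreviation "A \<equiv> cyc_prod p \<alpha> m"

definition q :: "nat \<Rightarrow> int" where "q i = int p ^ \<alpha> i"
definition red :: "(nat \<Rightarrow> int) \<Rightarrow> (nat \<Rightarrow> int)" where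
  "red u = (\<lambda>i. if i < m then u i mod q i else 0)"

lemma p_gt1: "int p > 1" using prime prime_gt_1_nat by auto

lemma q_pos: "q i > 0" unfolding q_def using p_gt1 by simp

lemma carrier_iff: "x \<in> carrier A \<longleftrightarrow> (\<forall>i<m. 0 \<le> x i \<and> x i < q i) \<and> (\<forall>i\<ge>m. x i = 0)"
  by (simp add: cyc_prod_def q_def)

lemma red_carrier[simp]: "red u \<in> carrier A"
  unfolding carrier_iff red_def using q_pos by auto

lemma red_id: "x \<in> carrier A \<Longrightarrow> red x = x"
  unfolding carrier_iff red_def by (auto simp: fun_eq_iff)

lemma red_eq_iff: "red u = red v \<longleftrightarrow> (\<forall>i<m. u i mod q i = v i mod q i)"
  unfolding red_def fun_eq_iff by (metis (no_types, lifting))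

lemma mult_eq: "x \<otimes>\<^bsub>A\<^esub> y = red (\<lambda>i. x i + y i)"
  unfolding cyc_prod_def red_def q_def by simp

lemma one_eq: "\<one>\<^bsub>A\<^esub> = (\<lambda>i. 0)"
  by (simp add: cyc_prod_def)

lemma zero_carrier[simp]: "(\<lambda>i. 0) \<in> carrier A"
  unfolding carrier_iff using q_pos by auto

lemma red_zero: "red (\<lambda>i. 0) = (\<lambda>i. 0)" by (rule red_id) simp

lemma red_cong: "(\<And>i. i < m \<Longrightarrow> u i mod q i = v i mod q i) \<Longrightarrow> red u = red v"
  using red_eq_iff by blast

lemma red_red_mod: "i < m \<Longrightarrow> red u i mod q i = u i mod q i"
  by (simp add: red_def)

lemma red_mod_simps[simp]:
  assumes "i < m"
  shows "red u i mod q i = u i mod q i"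
    "(red u i + v) mod q i = (u i + v) mod q i"
    "(v + red u i) mod q i = (v + u i) mod q i"
    "(c * red u i) mod q i = (c * u i) mod q i"
    "(- red u i) mod q i = (- u i) mod q i"
  using assms by (simp_all add: red_def mod_add_left_eq mod_add_right_eq mod_mult_right_eq mod_minus_eq)

lemma comm_group_A: "comm_group A"
proof (rule comm_groupI)
  fix x y assume "x \<in> carrier A" "y \<in> carrier A"
  thus "x \<otimes>\<^bsub>A\<^esub> y \<in> carrier A" by (simp add: mult_eq)
next
  show "\<one>\<^bsub>A\<^esub> \<in> carrier A" by (simp add: one_eq)
next
  fix x y z assume "x \<in> carrier A" "y \<in> carrier A" "z \<in> carrier A"
  show "x \<otimes>\<^bsub>A\<^esub> y \<otimes>\<^bsub>A\<^esub> z = x \<otimes>\<^bsub>A\<^esub> (y \<otimes>\<^bsub>A\<^esub> z)"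
    unfolding mult_eq by (rule red_cong) (simp add: add.assoc)
next
  fix x y assume "x \<in> carrier A" "y \<in> carrier A"
  show "x \<otimes>\<^bsub>A\<^esub> y = y \<otimes>\<^bsub>A\<^esub> x" unfolding mult_eq by (simp add: add.commute)
next
  fix x assume "x \<in> carrier A"
  thus "\<one>\<^bsub>A\<^esub> \<otimes>\<^bsub>A\<^esub> x = x" by (simp add: mult_eq one_eq red_id)
next
  fix x assume x: "x \<in> carrier A"
  show "\<exists>y\<in>carrier A. y \<otimes>\<^bsub>A\<^esub> x = \<one>\<^bsub>A\<^esub>"
  proof (intro bexI)
    show "red (\<lambda>i. - x i) \<otimes>\<^bsub>A\<^esub> x = \<one>\<^bsub>A\<^esub>"
      unfolding mult_eq one_eq by (subst red_zero[symmetric], rule red_cong) simp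
  qed simp
qed

interpretation AG: comm_group A by (rule comm_group_A)

lemma inv_eq: "x \<in> carrier A \<Longrightarrow> inv\<^bsub>A\<^esub> x = red (\<lambda>i. - x i)"
  apply (rule AG.inv_equality)
    apply (simp add: mult_eq one_eq)
    apply (subst red_zero[symmetric], rule red_cong) apply simp
  by auto

lemma pow_eq: "x \<in> carrier A \<Longrightarrow> x [^]\<^bsub>A\<^esub> (n::nat) = red (\<lambda>i. int n * x i)"
proof (induction n)
  case 0 then show ?case by (simp add: one_eq red_zero)
next
  case (Suc n) then show ?case
    unfolding nat_pow_Suc mult_eq
    by (intro red_cong) (simp add: distrib_right add.commute)
qed


definition lin :: "((nat \<Rightarrow> int) \<Rightarrow> (nat \<Rightarrow> int)) \<Rightarrow> bool" where
  "lin f \<longleftrightarrow> (\<forall>x\<in>carrier A. f x \<in> carrier A) \<and>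
     (\<forall>x\<in>carrier A. \<forall>y\<in>carrier A. f (red (\<lambda>i. x i + y i)) = red (\<lambda>i. f x i + f y i))"

lemma lin_carrier: "lin f \<Longrightarrow> x \<in> carrier A \<Longrightarrow> f x \<in> carrier A"
  by (simp add: lin_def)

lemma lin_red: assumes "lin f"
  shows "f (red (\<lambda>i. u i + v i)) = red (\<lambda>i. f (red u) i + f (red v) i)"
proof -
  have "red (\<lambda>i. u i + v i) = red (\<lambda>i. red u i + red v i)" by (rule red_cong) simp
  then show ?thesis using assms unfolding lin_def by simp
qed

lemma mod_self_double: "(a::int) mod b = (a + a) mod b \<Longrightarrow> a mod b = 0"
proof -
  assume "a mod b = (a + a) mod b"
  then have "b dvd a - (a + a)" by (simp add: mod_eq_dvd_iff)
  then have "b dvd a" by simp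
  then show ?thesis by simp
qed

lemma lin_zero: assumes "lin f" shows "f (\<lambda>i. 0) = (\<lambda>i. 0)"
proof -
  let ?z = "(\<lambda>i. 0::int)"
  have "f ?z = f (red (\<lambda>i. ?z i + ?z i))" by (simp add: red_zero)
  also have "\<dots> = red (\<lambda>i. f ?z i + f ?z i)" using conjunct2[OF assms[unfolded lin_def], rule_format, OF zero_carrier zero_carrier] by simp
  finally have e: "f ?z = red (\<lambda>i. f ?z i + f ?z i)" .
  have "red (f ?z) = red ?z"
  proof (rule red_cong)
    fix i assume i: "i < m"
    have "f ?z i mod q i = (f ?z i + f ?z i) mod q i"
      using arg_cong[OF e, of "\<lambda>g. g i mod q i"] i by simp
    then show "f ?z i mod q i = ?z i mod q i" using mod_self_double by simp
  qed
  then show ?thesis using red_id[OF lin_carrier[OF assms zero_carrier]] red_zero by simp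
qed

lemma lin_scal_nat: assumes "lin f" "x \<in> carrier A"
  shows "f (red (\<lambda>i. int n * x i)) = red (\<lambda>i. int n * f x i)"
proof (induction n)
  case 0 then show ?case using lin_zero[OF assms(1)] by (simp add: red_zero)
next
  case (Suc n)
  have "red (\<lambda>i. int (Suc n) * x i) = red (\<lambda>i. red (\<lambda>i. int n * x i) i + x i)"
    by (rule red_cong) (simp add: distrib_right add.commute)
  then have "f (red (\<lambda>i. int (Suc n) * x i)) = red (\<lambda>i. f (red (\<lambda>i. int n * x i)) i + f x i)"
    using assms lin_def by simp
  also have "\<dots> = red (\<lambda>i. int (Suc n) * f x i)"
    unfolding Suc by (rule red_cong) (simp add: distrib_right add.commute)
  finally show ?case .
qed

lemma lin_scal: assumes "lin f" "x \<in> carrier A"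
  shows "f (red (\<lambda>i. c * x i)) = red (\<lambda>i. c * f x i)"
proof (cases "c \<ge> 0")
  case True
  then obtain n where "c = int n" using nonneg_int_cases by blast
  then show ?thesis using lin_scal_nat[OF assms] by simp
next
  case False
  define n where "n = nat (- c)"
  have c: "c = - int n" using False unfolding n_def by simp
  have "(\<lambda>i. 0) = f (red (\<lambda>i. (- int n * x i) + int n * x i))"
    using lin_zero[OF assms(1)] by (simp add: red_zero)
  also have "\<dots> = red (\<lambda>i. f (red (\<lambda>i. - int n * x i)) i + f (red (\<lambda>i. int n * x i)) i)"
    using lin_red[OF assms(1)] .
  also have "\<dots> = red (\<lambda>i. f (red (\<lambda>i. - int n * x i)) i + int n * f x i)"
    unfolding lin_scal_nat[OF assms] by (rule red_cong) simp
  finally have e: "(\<lambda>i. 0) = red (\<lambda>i. f (red (\<lambda>i. - int n * x i)) i + int n * f x i)" .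
  have "red (f (red (\<lambda>i. - int n * x i))) = red (\<lambda>i. - int n * f x i)"
  proof (rule red_cong)
    fix i assume i: "i < m"
    have "0 = (f (red (\<lambda>i. - int n * x i)) i + int n * f x i) mod q i"
      using arg_cong[OF e, of "\<lambda>g. g i mod q i"] i by simp
    then show "f (red (\<lambda>i. - int n * x i)) i mod q i = (- int n * f x i) mod q i"
      by (metis add_diff_cancel_right' diff_0 mod_diff_left_eq mod_minus_eq mult_minus_left)
  qed
  then show ?thesis using red_id[OF lin_carrier[OF assms(1) red_carrier]] c by simp
qed

lemma lin_sum: assumes "lin f" "finite I" "\<And>k. k \<in> I \<Longrightarrow> y k \<in> carrier A"
  shows "f (red (\<lambda>i. \<Sum>k\<in>I. c k * y k i)) = red (\<lambda>i. \<Sum>k\<in>I. c k * f (y k) i)"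
  using assms(2,3)
proof (induction I rule: finite_induct)
  case empty then show ?case using lin_zero[OF assms(1)] by (simp add: red_zero)
next
  case (insert a I)
  have "f (red (\<lambda>i. \<Sum>k\<in>insert a I. c k * y k i)) =
        f (red (\<lambda>i. c a * y a i + (\<Sum>k\<in>I. c k * y k i)))" using insert by simp
  also have "\<dots> = red (\<lambda>i. f (red (\<lambda>i. c a * y a i)) i + f (red (\<lambda>i. \<Sum>k\<in>I. c k * y k i)) i)"
    by (rule lin_red[OF assms(1)])
  also have "\<dots> = red (\<lambda>i. c a * f (y a) i + (\<Sum>k\<in>I. c k * f (y k) i))"
    using insert lin_scal[OF assms(1), of "y a"] by (intro red_cong) simp
  also have "\<dots> = red (\<lambda>i. \<Sum>k\<in>insert a I. c k * f (y k) i)" using insert by simp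
  finally show ?case .
qed

lemma lin_comp: assumes "lin f" "lin g" shows "lin (\<lambda>x. f (g x))"
  unfolding lin_def
proof (intro conjI ballI)
  fix x y assume "x \<in> carrier A" "y \<in> carrier A"
  then show "f (g (red (\<lambda>i. x i + y i))) = red (\<lambda>i. f (g x) i + f (g y) i)"
  proof -
    have gx: "g x \<in> carrier A" "g y \<in> carrier A" using assms \<open>x \<in> carrier A\<close> \<open>y \<in> carrier A\<close> lin_carrier by auto
    have "g (red (\<lambda>i. x i + y i)) = red (\<lambda>i. g x i + g y i)"
      using conjunct2[OF assms(2)[unfolded lin_def]] \<open>x \<in> carrier A\<close> \<open>y \<in> carrier A\<close> by blast
    moreover have "f (red (\<lambda>i. g x i + g y i)) = red (\<lambda>i. f (g x) i + f (g y) i)"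
      using conjunct2[OF assms(1)[unfolded lin_def]] gx by blast
    ultimately show ?thesis by simp
  qed
qed (use assms lin_carrier in blast)

lemma lin_hom: assumes "M \<in> hom A A" shows "lin M"
  unfolding lin_def
proof (intro conjI ballI)
  fix x y assume "x \<in> carrier A" "y \<in> carrier A"
  then show "M (red (\<lambda>i. x i + y i)) = red (\<lambda>i. M x i + M y i)"
    using hom_mult[OF assms] unfolding mult_eq by blast
qed (use hom_in_carrier[OF assms] in blast)

lemma lin_id: "lin (\<lambda>x. x)" unfolding lin_def by (simp add: red_id)


lemma hom_lin: assumes "lin f" shows "f \<in> hom A A"
  unfolding hom_def
proof (intro CollectI conjI ballI)
  show "f \<in> carrier A \<rightarrow> carrier A" using assms lin_carrier by auto
  fix x y assume "x \<in> carrier A" "y \<in> carrier A"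
  then show "f (x \<otimes>\<^bsub>A\<^esub> y) = f x \<otimes>\<^bsub>A\<^esub> f y"
    using conjunct2[OF assms[unfolded lin_def]] unfolding mult_eq by blast
qed

lemma hom_carr: "f \<in> hom A A \<Longrightarrow> x \<in> carrier A \<Longrightarrow> f x \<in> carrier A"
  unfolding hom_def by blast

lemma hom_m: "f \<in> hom A A \<Longrightarrow> x \<in> carrier A \<Longrightarrow> y \<in> carrier A \<Longrightarrow> f (x \<otimes>\<^bsub>A\<^esub> y) = f x \<otimes>\<^bsub>A\<^esub> f y"
  unfolding hom_def by blast

lemma hom_1: "f \<in> hom A A \<Longrightarrow> f \<one>\<^bsub>A\<^esub> = \<one>\<^bsub>A\<^esub>"
  by (rule hom_one[OF _ AG.is_group AG.is_group])

lemma hom_ipow: "f \<in> hom A A \<Longrightarrow> x \<in> carrier A \<Longrightarrow> f (x [^]\<^bsub>A\<^esub> (c::int)) = f x [^]\<^bsub>A\<^esub> c"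
  by (rule hom_int_pow[OF _ _ AG.is_group AG.is_group])

primrec evl :: "((nat \<Rightarrow> int) \<Rightarrow> (nat \<Rightarrow> int)) \<Rightarrow> int list \<Rightarrow> (nat \<Rightarrow> int) \<Rightarrow> (nat \<Rightarrow> int)" where
  "evl M [] x = \<one>\<^bsub>A\<^esub>"
| "evl M (c # cs) x = x [^]\<^bsub>A\<^esub> c \<otimes>\<^bsub>A\<^esub> M (evl M cs x)"

definition ev :: "((nat \<Rightarrow> int) \<Rightarrow> (nat \<Rightarrow> int)) \<Rightarrow> int poly \<Rightarrow> (nat \<Rightarrow> int) \<Rightarrow> (nat \<Rightarrow> int)" where
  "ev M f = evl M (coeffs f)"

context
  fixes M assumes hM: "M \<in> hom A A"
begin

lemma evl_carrier: "x \<in> carrier A \<Longrightarrow> evl M cs x \<in> carrier A"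
  by (induction cs) (auto intro: hom_carr[OF hM])

lemma ev_carrier[simp]: "x \<in> carrier A \<Longrightarrow> ev M f x \<in> carrier A"
  unfolding ev_def by (rule evl_carrier)

lemma ev_0[simp]: "ev M 0 x = \<one>\<^bsub>A\<^esub>"
  unfolding ev_def by simp

lemma ev_pCons: assumes "x \<in> carrier A"
  shows "ev M (pCons a f) x = x [^]\<^bsub>A\<^esub> a \<otimes>\<^bsub>A\<^esub> M (ev M f x)"
proof (cases "f = 0 \<and> a = 0")
  case True
  then show ?thesis using hom_1[OF hM] by simp
next
  case False
  then have "coeffs (pCons a f) = a # coeffs f" by (auto simp: cCons_def)
  then show ?thesis unfolding ev_def by simp
qed

lemma ev_add: assumes x: "x \<in> carrier A"
  shows "ev M (f + g) x = ev M f x \<otimes>\<^bsub>A\<^esub> ev M g x"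
proof (induction f arbitrary: g rule: pCons_induct)
  case 0 then show ?case using x by simp
next
  case (pCons a f)
  obtain b g' where g: "g = pCons b g'" by (rule pCons_cases)
  show ?case
    unfolding g add_pCons ev_pCons[OF x] pCons.IH
    using x hom_carr[OF hM] ev_carrier[OF x]
    by (simp add: AG.int_pow_mult hom_m[OF hM] AG.m_ac)
qed

lemma ev_smult: assumes x: "x \<in> carrier A"
  shows "ev M (smult c f) x = ev M f x [^]\<^bsub>A\<^esub> c"
proof (induction f rule: pCons_induct)
  case 0 then show ?case by simp
next
  case (pCons a f)
  show ?case
    unfolding smult_pCons ev_pCons[OF x] pCons.IH
    using x hom_carr[OF hM] ev_carrier[OF x]
    by (simp add: hom_ipow[OF hM] AG.int_pow_distrib AG.int_pow_pow mult.commute)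
qed

lemma ev_mult: assumes x: "x \<in> carrier A"
  shows "ev M (f * g) x = ev M f (ev M g x)"
proof (induction f rule: pCons_induct)
  case 0 then show ?case by simp
next
  case (pCons a f)
  show ?case
    unfolding mult_pCons_left ev_add[OF x] ev_smult[OF x] ev_pCons[OF x] ev_pCons[OF ev_carrier[OF x]] pCons.IH
    using x hom_carr[OF hM] ev_carrier[OF x] by simp
qed

lemma ev_one: assumes "x \<in> carrier A" shows "ev M 1 x = x"
proof -
  have "ev M 1 x = ev M (pCons 1 0) x" by (simp add: one_pCons)
  also have "\<dots> = x" unfolding ev_pCons[OF assms] using assms hom_1[OF hM] by simp
  finally show ?thesis .
qed

lemma ev_X: assumes "x \<in> carrier A" shows "ev M [:0, 1:] x = M x"
proof -
  have "ev M [:0, 1:] x = ev M (pCons 0 1) x" by (simp add: one_pCons)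
  also have "\<dots> = M x" unfolding ev_pCons[OF assms] ev_one[OF assms] using assms hom_carr[OF hM] by simp
  finally show ?thesis .
qed

lemma ev_D: assumes "x \<in> carrier A"
  shows "ev M [:-1, 1:] x = M x \<otimes>\<^bsub>A\<^esub> inv\<^bsub>A\<^esub> x"
proof -
  have "ev M [:-1, 1:] x = ev M (pCons (-1) 1) x" by (simp add: one_pCons)
  also have "\<dots> = M x \<otimes>\<^bsub>A\<^esub> inv\<^bsub>A\<^esub> x" unfolding ev_pCons[OF assms] ev_one[OF assms]
    using assms hom_carr[OF hM] by (simp add: AG.int_pow_neg AG.m_comm)
  finally show ?thesis .
qed

lemma ev_Xpow: assumes "x \<in> carrier A" shows "ev M ([:0, 1:] ^ n) x = (M ^^ n) x"
proof (induction n)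
  case 0 then show ?case using assms by (simp add: ev_one)
next
  case (Suc n)
  have "ev M ([:0, 1:] ^ Suc n) x = ev M [:0, 1:] (ev M ([:0, 1:] ^ n) x)"
    unfolding power_Suc ev_mult[OF assms] ..
  moreover have "(M ^^ n) x \<in> carrier A" using Suc.IH ev_carrier[OF assms] by metis
  ultimately show ?case using Suc.IH by (simp add: ev_X)
qed

lemma ev_hom: "ev M f \<in> hom A A"
  unfolding hom_def
proof (intro CollectI conjI ballI)
  show "ev M f \<in> carrier A \<rightarrow> carrier A" by auto
  fix x y assume x: "x \<in> carrier A" and y: "y \<in> carrier A"
  show "ev M f (x \<otimes>\<^bsub>A\<^esub> y) = ev M f x \<otimes>\<^bsub>A\<^esub> ev M f y"
  proof (induction f rule: pCons_induct)
    case 0 then show ?case by simp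
  next
    case (pCons a f)
    show ?case
      unfolding ev_pCons[OF x] ev_pCons[OF y] ev_pCons[OF AG.m_closed[OF x y]] pCons.IH
      using x y hom_carr[OF hM] ev_carrier[OF x] ev_carrier[OF y]
      by (simp add: AG.int_pow_distrib hom_m[OF hM] AG.m_ac)
  qed
qed

end


definition Cs :: "(nat \<Rightarrow> nat) \<Rightarrow> (nat \<Rightarrow> int) set" where
  "Cs e = {x \<in> carrier A. \<forall>i<m. int p ^ e i dvd x i}"

lemma card_Cs:
  assumes e: "\<And>i. i < m \<Longrightarrow> e i \<le> \<alpha> i"
  shows "finite (Cs e) \<and> card (Cs e) = (\<Prod>i<m. p ^ (\<alpha> i - e i))"
proof -
  define h :: "(nat \<Rightarrow> int) \<Rightarrow> (nat \<Rightarrow> int)" where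
    "h g = (\<lambda>i. if i < m then int p ^ e i * g i else 0)" for g
  define B where "B = PiE {..<m} (\<lambda>i. {0..<int p ^ (\<alpha> i - e i)})"
  have pe: "int p ^ e i * int p ^ (\<alpha> i - e i) = q i" if "i < m" for i
  proof -
    have h: "e i + (\<alpha> i - e i) = \<alpha> i" using e[OF that] by simp
    have "q i = int p ^ (e i + (\<alpha> i - e i))" unfolding q_def h ..
    also have "\<dots> = int p ^ e i * int p ^ (\<alpha> i - e i)" by (rule power_add)
    finally show ?thesis by (rule sym)
  qed
  have ppos: "int p ^ k > 0" for k using p_gt1 by (intro zero_less_power) simp
  have "h ` B \<subseteq> Cs e"
  proof
    fix x assume "x \<in> h ` B"
    then obtain g where g: "g \<in> B" and x: "x = h g" by blast
    have "x \<in> carrier A" unfolding carrier_iff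
    proof (rule conjI; intro allI impI)
      fix i assume i: "i < m"
      have "g i \<in> {0..<int p ^ (\<alpha> i - e i)}" using PiE_mem[OF g[unfolded B_def], of i] i by simp
      then have g1: "0 \<le> g i" "g i < int p ^ (\<alpha> i - e i)" by auto
      have lt: "int p ^ e i * g i < int p ^ e i * int p ^ (\<alpha> i - e i)"
        by (rule mult_strict_left_mono[OF g1(2) ppos])
      have xi: "x i = int p ^ e i * g i" unfolding x h_def using i by simp
      have "0 \<le> x i" unfolding xi by (rule mult_nonneg_nonneg[OF less_imp_le[OF ppos] g1(1)])
      moreover have "x i < q i" using lt unfolding xi pe[OF i] .
      ultimately show "0 \<le> x i \<and> x i < q i" by blast
    next
      fix i :: nat assume "m \<le> i" then show "x i = 0" unfolding x h_def by simp
    qed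
    moreover have "\<forall>i<m. int p ^ e i dvd x i" unfolding x h_def by simp
    ultimately show "x \<in> Cs e" unfolding Cs_def by blast
  qed
  moreover have "Cs e \<subseteq> h ` B"
  proof
    fix x assume x: "x \<in> Cs e"
    define g where "g = (\<lambda>i. if i < m then x i div int p ^ e i else undefined)"
    have "g \<in> B" unfolding B_def
    proof (rule PiE_I)
      fix i assume "i \<in> {..<m}"
      then have i: "i < m" by simp
      obtain t where t: "x i = int p ^ e i * t" using x i unfolding Cs_def by blast
      have "0 \<le> x i" "x i < q i" using x i unfolding Cs_def carrier_iff by auto
      then have t0: "0 \<le> int p ^ e i * t" "int p ^ e i * t < int p ^ e i * int p ^ (\<alpha> i - e i)"
        using t pe[OF i] by auto
      have "0 \<le> t"
      proof (rule ccontr)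
        assume "\<not> 0 \<le> t"
        then have "int p ^ e i * t < 0" using mult_pos_neg[OF ppos[of "e i"], of t] by linarith
        then show False using t0(1) by linarith
      qed
      moreover have "t < int p ^ (\<alpha> i - e i)"
        using t0(2) mult_less_cancel_left_pos[OF ppos[of "e i"]] by blast
      ultimately have "0 \<le> t" "t < int p ^ (\<alpha> i - e i)" by auto
      then show "g i \<in> {0..<int p ^ (\<alpha> i - e i)}" unfolding g_def using i t ppos[of "e i"] by simp
    next
      fix i assume "i \<notin> {..<m}" then show "g i = undefined" unfolding g_def by simp
    qed
    moreover have "h g = x"
    proof
      fix i show "h g i = x i"
      proof (cases "i < m")
        case True
        then have "int p ^ e i dvd x i" using x unfolding Cs_def by blast
        then show ?thesis unfolding h_def g_def using True by simp
      next
        case False then show ?thesis using x unfolding h_def Cs_def carrier_iff by simp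
      qed
    qed
    ultimately show "x \<in> h ` B" by blast
  qed
  ultimately have CB: "Cs e = h ` B" by blast
  have inj: "inj_on h B"
  proof (rule inj_onI)
    fix g g' assume g: "g \<in> B" and g': "g' \<in> B" and hh: "h g = h g'"
    show "g = g'"
    proof (rule PiE_ext[OF g[unfolded B_def] g'[unfolded B_def]])
      fix i assume "i \<in> {..<m}"
      then have i: "i < m" by simp
      have eq: "int p ^ e i * g i = int p ^ e i * g' i" using fun_cong[OF hh, of i] i unfolding h_def by simp
      have nz: "int p ^ e i \<noteq> 0" using ppos[of "e i"] by linarith
      show "g i = g' i" using mult_left_cancel[OF nz] eq by blast
    qed
  qed
  have "card B = (\<Prod>i<m. card {0..<int p ^ (\<alpha> i - e i)})"
    unfolding B_def by (rule card_PiE) simp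
  also have "\<dots> = (\<Prod>i<m. p ^ (\<alpha> i - e i))"
  proof (rule prod.cong)
    fix i
    have "card {0..<int p ^ (\<alpha> i - e i)} = nat (int p ^ (\<alpha> i - e i))" by simp
    also have "\<dots> = p ^ (\<alpha> i - e i)" by (simp only: of_nat_power[symmetric] nat_int)
    finally show "card {0..<int p ^ (\<alpha> i - e i)} = p ^ (\<alpha> i - e i)" .
  qed simp
  finally have cB: "card B = (\<Prod>i<m. p ^ (\<alpha> i - e i))" .
  have fB: "finite B" unfolding B_def by (rule finite_PiE) auto
  have "card (Cs e) = card B" unfolding CB by (rule card_image[OF inj])
  then show ?thesis using cB fB CB by simp
qed

definition ee :: "nat \<Rightarrow> nat \<Rightarrow> nat" where "ee a i = \<alpha> i - min a (\<alpha> i)"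

definition Gs :: "nat \<Rightarrow> (nat \<Rightarrow> int) set" where
  "Gs a = {x \<in> carrier A. x [^]\<^bsub>A\<^esub> (p ^ a) = \<one>\<^bsub>A\<^esub>}"

definition Ps :: "nat \<Rightarrow> (nat \<Rightarrow> int) set" where
  "Ps a = (\<lambda>y. y [^]\<^bsub>A\<^esub> p) ` Gs a"

lemma pow_one_iff: assumes "x \<in> carrier A"
  shows "x [^]\<^bsub>A\<^esub> (n::nat) = \<one>\<^bsub>A\<^esub> \<longleftrightarrow> (\<forall>i<m. q i dvd int n * x i)"
proof -
  have "x [^]\<^bsub>A\<^esub> n = \<one>\<^bsub>A\<^esub> \<longleftrightarrow> red (\<lambda>i. int n * x i) = red (\<lambda>i. 0)"
    unfolding pow_eq[OF assms] one_eq red_zero ..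
  also have "\<dots> \<longleftrightarrow> (\<forall>i<m. q i dvd int n * x i)"
    unfolding red_eq_iff by (simp add: dvd_eq_mod_eq_0)
  finally show ?thesis .
qed

lemma nt1: "int p ^ b dvd int p ^ a * x \<longleftrightarrow> int p ^ (b - min a b) dvd x"
proof (cases "a \<ge> b")
  case True
  then have "int p ^ b dvd int p ^ a" by (simp add: le_imp_power_dvd)
  then show ?thesis using True by simp
next
  case False
  then have "int p ^ b = int p ^ a * int p ^ (b - a)" by (simp add: power_add[symmetric])
  then show ?thesis using False p_gt1 by simp
qed

lemma Gs_Cs: "Gs a = Cs (ee a)"
  unfolding Gs_def Cs_def ee_def
  using pow_one_iff by (auto simp: q_def nt1)

lemma Gs_dvd: assumes "y \<in> Gs a" "j < m" shows "q j dvd int p ^ a * y j"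
  using assms pow_one_iff unfolding Gs_def by auto

lemma Ps_Cs: assumes a: "a \<ge> 1" shows "Ps a = Cs (\<lambda>i. Suc (ee a i))"
proof (rule equalityI)
  show "Ps a \<subseteq> Cs (\<lambda>i. Suc (ee a i))"
  proof
    fix x assume "x \<in> Ps a"
    then obtain y where y: "y \<in> Gs a" and x: "x = y [^]\<^bsub>A\<^esub> p" unfolding Ps_def by blast
    have yc: "y \<in> carrier A" using y unfolding Gs_def by blast
    have "\<forall>i<m. int p ^ Suc (ee a i) dvd x i"
    proof (intro allI impI)
      fix i assume i: "i < m"
      have "int p ^ ee a i dvd y i" using y i unfolding Gs_Cs Cs_def by blast
      then have d1: "int p ^ Suc (ee a i) dvd int p * y i" by simp
      have "Suc (ee a i) \<le> \<alpha> i" using pos i a unfolding ee_def by auto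
      then have d2: "int p ^ Suc (ee a i) dvd q i" unfolding q_def by (rule le_imp_power_dvd)
      have "x i = (int p * y i) mod q i" unfolding x pow_eq[OF yc] red_def using i by simp
      then show "int p ^ Suc (ee a i) dvd x i" using d1 d2 by (simp add: dvd_mod)
    qed
    then show "x \<in> Cs (\<lambda>i. Suc (ee a i))" unfolding Cs_def x using yc by auto
  qed
next
  show "Cs (\<lambda>i. Suc (ee a i)) \<subseteq> Ps a"
  proof
    fix x assume x: "x \<in> Cs (\<lambda>i. Suc (ee a i))"
    then have xc: "x \<in> carrier A" unfolding Cs_def by blast
    define y where "y = (\<lambda>i. x i div int p)"
    have pd: "int p dvd x i" if "i < m" for i
    proof -
      have "int p ^ Suc (ee a i) dvd x i" using x that unfolding Cs_def by blast
      then show ?thesis using dvd_trans[of "int p" "int p ^ Suc (ee a i)" "x i"] by simp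
    qed
    have yc: "y \<in> carrier A" unfolding carrier_iff
    proof (rule conjI; intro allI impI)
      fix i assume i: "i < m"
      have "0 \<le> x i" "x i < q i" using xc i unfolding carrier_iff by auto
      moreover have "x i div int p \<le> x i" using \<open>0 \<le> x i\<close> p_gt1 int_div_less_self[of "x i" "int p"]
        by (cases "x i = 0") auto
      ultimately show "0 \<le> y i \<and> y i < q i" unfolding y_def using p_gt1 by (simp add: pos_imp_zdiv_nonneg_iff)
    next
      fix i :: nat assume "m \<le> i" then show "y i = 0" using xc unfolding y_def carrier_iff by simp
    qed
    have "y \<in> Cs (ee a)" unfolding Cs_def
    proof (intro CollectI conjI allI impI yc)
      fix i assume i: "i < m"
      then obtain t where "x i = int p ^ Suc (ee a i) * t" using x unfolding Cs_def by blast
      then have "y i = int p ^ ee a i * t" unfolding y_def using p_gt1 by simp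
      then show "int p ^ ee a i dvd y i" by simp
    qed
    moreover have "y [^]\<^bsub>A\<^esub> p = x"
    proof -
      have "y [^]\<^bsub>A\<^esub> p = red x" unfolding pow_eq[OF yc]
        by (rule red_cong) (simp add: y_def pd)
      then show ?thesis using red_id[OF xc] by simp
    qed
    ultimately show "x \<in> Ps a" unfolding Ps_def Gs_Cs by blast
  qed
qed

lemma card_Gs_Ps: assumes a: "a \<ge> 1"
  shows "finite (Gs a)" "card (Gs a) = p ^ m * card (Ps a)" "\<exists>E. card (Gs a) = p ^ E"
proof -
  have le1: "ee a i \<le> \<alpha> i" for i unfolding ee_def by simp
  have le2: "Suc (ee a i) \<le> \<alpha> i" if "i < m" for i using pos that a unfolding ee_def by auto
  note c1 = card_Cs[of "ee a", OF le1] and c2 = card_Cs[of "\<lambda>i. Suc (ee a i)", OF le2]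
  show "finite (Gs a)" using c1 Gs_Cs by simp
  have "card (Gs a) = (\<Prod>i<m. p ^ (\<alpha> i - ee a i))" using c1 Gs_Cs by simp
  also have "\<dots> = (\<Prod>i<m. p * p ^ (\<alpha> i - Suc (ee a i)))"
  proof (rule prod.cong)
    fix i assume "i \<in> {..<m}"
    then have "\<alpha> i - ee a i = Suc (\<alpha> i - Suc (ee a i))" using le2[of i] by simp
    then show "p ^ (\<alpha> i - ee a i) = p * p ^ (\<alpha> i - Suc (ee a i))" by simp
  qed simp
  also have "\<dots> = p ^ m * (\<Prod>i<m. p ^ (\<alpha> i - Suc (ee a i)))" by (simp add: prod.distrib)
  also have "\<dots> = p ^ m * card (Ps a)" using c2 Ps_Cs[OF a] by simp
  finally show "card (Gs a) = p ^ m * card (Ps a)" .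
  have "card (Gs a) = p ^ (\<Sum>i<m. \<alpha> i - ee a i)" using c1 Gs_Cs by (simp add: power_sum[symmetric])
  then show "\<exists>E. card (Gs a) = p ^ E" by blast
qed


lemma funpow_hom: assumes "D \<in> hom A A" shows "(D ^^ n) \<in> hom A A"
proof (induction n)
  case 0 then show ?case by (simp add: hom_def)
next
  case (Suc n)
  have "D \<circ> D ^^ n \<in> hom A A" using hom_compose[OF Suc assms] by simp
  then show ?case by (simp only: funpow.simps(2))
qed

lemma hom_inverse: assumes "f \<in> hom A A" "x \<in> carrier A" shows "f (inv\<^bsub>A\<^esub> x) = inv\<^bsub>A\<^esub> (f x)"
proof -
  interpret gh: group_hom A A f by (simp add: group_hom_def group_hom_axioms_def AG.is_group assms(1))
  show ?thesis using assms(2) by simp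
qed

lemma card_sub_dvd:
  assumes H: "subgroup H A" and K: "subgroup K A" and HK: "H \<subseteq> K"
  shows "card H dvd card K"
proof -
  interpret K: group "A\<lparr>carrier := K\<rparr>" by (rule subgroup.subgroup_is_group[OF K AG.is_group])
  have "subgroup H (A\<lparr>carrier := K\<rparr>)" by (rule AG.subgroup_incl[OF H K HK])
  from K.lagrange[OF this] have "card (rcosets\<^bsub>A\<lparr>carrier := K\<rparr>\<^esub> H) * card H = card K"
    by (simp add: order_def)
  then show ?thesis by (metis dvd_triv_right)
qed

lemma chain:
  assumes D: "D \<in> hom A A" and G: "subgroup G A" and P: "subgroup P A" and PG: "P \<subseteq> G"
    and DG: "\<And>g. g \<in> G \<Longrightarrow> D g \<in> G" and DP: "\<And>v. v \<in> P \<Longrightarrow> D v \<in> P"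
    and N: "\<And>g. g \<in> G \<Longrightarrow> (D ^^ N) g \<in> P"
    and fin: "finite G" and cG: "card G = p ^ m * card P" and E: "card G = p ^ E"
  shows "\<And>g. g \<in> G \<Longrightarrow> (D ^^ m) g \<in> P"
proof -
  have Gc: "G \<subseteq> carrier A" using G subgroup.subset by blast
  have Pc: "P \<subseteq> carrier A" using P subgroup.subset by blast
  have Djh: "(D ^^ j) \<in> hom A A" for j by (rule funpow_hom[OF D])
  have DjG: "(D ^^ j) g \<in> G" if "g \<in> G" for g j
    by (induction j) (use that DG in auto)
  have Dj1: "(D ^^ j) \<one>\<^bsub>A\<^esub> = \<one>\<^bsub>A\<^esub>" for j by (rule hom_1[OF Djh])
  define S where "S j = {(D ^^ j) g \<otimes>\<^bsub>A\<^esub> v | g v. g \<in> G \<and> v \<in> P}" for j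
  define \<Phi> where "\<Phi> X = {D s \<otimes>\<^bsub>A\<^esub> v | s v. s \<in> X \<and> v \<in> P}" for X
  have SG: "S j \<subseteq> G" for j
    unfolding S_def using DjG PG subgroup.m_closed[OF G] by blast
  have PS: "P \<subseteq> S j" for j
  proof
    fix v assume v: "v \<in> P"
    have "v = (D ^^ j) \<one>\<^bsub>A\<^esub> \<otimes>\<^bsub>A\<^esub> v" unfolding Dj1 using v Pc by auto
    moreover have "\<one>\<^bsub>A\<^esub> \<in> G" using subgroup.one_closed[OF G] .
    ultimately show "v \<in> S j" unfolding S_def using v by blast
  qed
  have Ssg: "subgroup (S j) A" for j
  proof (rule AG.subgroupI)
    show "S j \<subseteq> carrier A" using SG Gc by blast
    show "S j \<noteq> {}" using PS subgroup.one_closed[OF P] by blast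
  next
    fix a assume "a \<in> S j"
    then obtain g v where g: "g \<in> G" and v: "v \<in> P" and a: "a = (D ^^ j) g \<otimes>\<^bsub>A\<^esub> v"
      unfolding S_def by blast
    have gc: "g \<in> carrier A" and vc: "v \<in> carrier A" using g v Gc Pc by auto
    have "inv\<^bsub>A\<^esub> a = (D ^^ j) (inv\<^bsub>A\<^esub> g) \<otimes>\<^bsub>A\<^esub> inv\<^bsub>A\<^esub> v"
      unfolding a using gc vc hom_carr[OF Djh] by (simp add: AG.inv_mult hom_inverse[OF Djh])
    moreover have "inv\<^bsub>A\<^esub> g \<in> G" "inv\<^bsub>A\<^esub> v \<in> P"
      using g v subgroup.m_inv_closed[OF G] subgroup.m_inv_closed[OF P] by auto
    ultimately show "inv\<^bsub>A\<^esub> a \<in> S j" unfolding S_def by blast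
  next
    fix a b assume "a \<in> S j" "b \<in> S j"
    then obtain g v g' v' where g: "g \<in> G" and v: "v \<in> P" and a: "a = (D ^^ j) g \<otimes>\<^bsub>A\<^esub> v"
      and g': "g' \<in> G" and v': "v' \<in> P" and b: "b = (D ^^ j) g' \<otimes>\<^bsub>A\<^esub> v'"
      unfolding S_def by blast
    have c: "g \<in> carrier A" "v \<in> carrier A" "g' \<in> carrier A" "v' \<in> carrier A" using g v g' v' Gc Pc by auto
    have "a \<otimes>\<^bsub>A\<^esub> b = (D ^^ j) (g \<otimes>\<^bsub>A\<^esub> g') \<otimes>\<^bsub>A\<^esub> (v \<otimes>\<^bsub>A\<^esub> v')"
      unfolding a b using c hom_carr[OF Djh] by (simp add: hom_m[OF Djh] AG.m_ac)
    moreover have "g \<otimes>\<^bsub>A\<^esub> g' \<in> G" "v \<otimes>\<^bsub>A\<^esub> v' \<in> P"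
      using g v g' v' subgroup.m_closed[OF G] subgroup.m_closed[OF P] by auto
    ultimately show "a \<otimes>\<^bsub>A\<^esub> b \<in> S j" unfolding S_def by blast
  qed
  have SSuc: "S (Suc j) = \<Phi> (S j)" for j
  proof (rule equalityI; rule subsetI)
    fix x assume "x \<in> S (Suc j)"
    then obtain g v where g: "g \<in> G" and v: "v \<in> P" and x: "x = (D ^^ Suc j) g \<otimes>\<^bsub>A\<^esub> v"
      unfolding S_def by blast
    have "(D ^^ j) g \<in> carrier A" using DjG[OF g, of j] Gc by blast
    then have "(D ^^ j) g = (D ^^ j) g \<otimes>\<^bsub>A\<^esub> \<one>\<^bsub>A\<^esub>" by simp
    then have "(D ^^ j) g \<in> S j" unfolding S_def using g subgroup.one_closed[OF P] by blast
    then show "x \<in> \<Phi> (S j)" unfolding \<Phi>_def x using v by auto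
  next
    fix x assume "x \<in> \<Phi> (S j)"
    then obtain s v where s: "s \<in> S j" and v: "v \<in> P" and x: "x = D s \<otimes>\<^bsub>A\<^esub> v"
      unfolding \<Phi>_def by blast
    obtain g v' where g: "g \<in> G" and v': "v' \<in> P" and s': "s = (D ^^ j) g \<otimes>\<^bsub>A\<^esub> v'"
      using s unfolding S_def by blast
    have c: "g \<in> carrier A" "v \<in> carrier A" "v' \<in> carrier A" using g v v' Gc Pc by auto
    have "x = (D ^^ Suc j) g \<otimes>\<^bsub>A\<^esub> (D v' \<otimes>\<^bsub>A\<^esub> v)"
      unfolding x s' using c hom_carr[OF Djh] hom_carr[OF D] by (simp add: hom_m[OF D] AG.m_ac)
    moreover have "D v' \<otimes>\<^bsub>A\<^esub> v \<in> P" using DP[OF v'] v subgroup.m_closed[OF P] by blast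
    ultimately show "x \<in> S (Suc j)" unfolding S_def using g by blast
  qed
  have Sdec: "S (Suc j) \<subseteq> S j" for j
  proof
    fix x assume "x \<in> S (Suc j)"
    then obtain g v where g: "g \<in> G" and v: "v \<in> P" and x: "x = (D ^^ Suc j) g \<otimes>\<^bsub>A\<^esub> v"
      unfolding S_def by blast
    have "x = (D ^^ j) (D g) \<otimes>\<^bsub>A\<^esub> v" unfolding x funpow_Suc_right by simp
    then show "x \<in> S j" unfolding S_def using DG[OF g] v by blast
  qed
  have Smono: "S k \<subseteq> S j" if "j \<le> k" for j k
    using that
  proof (induction k)
    case 0 then show ?case by simp
  next
    case (Suc k) then show ?case using Sdec[of k] by (cases "j = Suc k") auto
  qed
  have SNP: "S N \<subseteq> P" unfolding S_def using N subgroup.m_closed[OF P] by blast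
  have stable: "S n = S j" if "S j = S (Suc j)" "j \<le> n" for j n
    using that(2)
  proof (induction n)
    case 0 then show ?case by simp
  next
    case (Suc n)
    show ?case
    proof (cases "j = Suc n")
      case False
      then have "S n = S j" using Suc by simp
      then have "S (Suc n) = S (Suc j)" unfolding SSuc by simp
      then show ?thesis using that(1) by simp
    qed simp
  qed
  have stableP: "S j = P" if "S j = S (Suc j)" for j
  proof -
    have "S j = S (max j N)" using stable[OF that, of "max j N"] by simp
    also have "\<dots> \<subseteq> S N" by (rule Smono) simp
    finally show ?thesis using SNP PS[of j] by blast
  qed
  have finS: "finite (S j)" for j using SG fin finite_subset by blast
  have finP: "finite P" using PG fin finite_subset by blast
  have powS: "\<exists>k. card (S j) = p ^ k" for j
  proof -
    have "card (S j) dvd p ^ E" using card_sub_dvd[OF Ssg G SG] E by simp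
    then obtain k where "normalize (card (S j)) = p ^ k" using divides_primepow[OF prime] by blast
    then show ?thesis by auto
  qed
  have claim: "S j = P \<or> card (S j) * p ^ j \<le> card G" for j
  proof (induction j)
    case 0 then show ?case using card_mono[OF fin SG[of 0]] by simp
  next
    case (Suc j)
    show ?case
    proof (cases "S j = P")
      case True
      then have "S (Suc j) = P" using Sdec[of j] PS[of "Suc j"] by blast
      then show ?thesis by simp
    next
      case False
      then have le: "card (S j) * p ^ j \<le> card G" using Suc by simp
      have ne: "S (Suc j) \<noteq> S j" using stableP[of j] False by auto
      then have "S (Suc j) \<subset> S j" using Sdec by blast
      then have lt: "card (S (Suc j)) < card (S j)" using psubset_card_mono finS by blast
      have dv: "card (S (Suc j)) dvd card (S j)" by (rule card_sub_dvd[OF Ssg Ssg Sdec])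
      obtain a where a: "card (S j) = p ^ a" using powS by blast
      obtain b where b: "card (S (Suc j)) = p ^ b" using powS by blast
      have "b < a" using lt a b p_gt1 by (simp add: power_strict_increasing_iff)
      then have "p ^ a = p ^ b * p ^ (a - b)" by (simp add: power_add[symmetric])
      moreover have "p ^ 1 \<le> p ^ (a - b)" using \<open>b < a\<close> p_gt1
        by (intro power_increasing) auto
      ultimately have "p ^ b * p \<le> p ^ a" by simp
      then have "card (S (Suc j)) * p \<le> card (S j)" using a b by simp
      then have "(card (S (Suc j)) * p) * p ^ j \<le> card (S j) * p ^ j"
        by (rule mult_le_mono1)
      then have "card (S (Suc j)) * p ^ Suc j \<le> card (S j) * p ^ j"
        by (simp add: mult_ac)
      then show ?thesis using le by linarith
    qed
  qed
  have Sm: "S m = P"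
  proof (cases "S m = P")
    case False
    then have "card (S m) * p ^ m \<le> p ^ m * card P" using claim[of m] cG by simp
    then have "card (S m) \<le> card P" using p_gt1 by (simp add: mult.commute)
    then show ?thesis using card_seteq[OF finS[of m] PS[of m]] by simp
  qed simp
  fix g assume g: "g \<in> G"
  have "(D ^^ m) g \<in> carrier A" using DjG[OF g, of m] Gc by blast
  then have "(D ^^ m) g = (D ^^ m) g \<otimes>\<^bsub>A\<^esub> \<one>\<^bsub>A\<^esub>" by simp
  then have "(D ^^ m) g \<in> S m" unfolding S_def using g subgroup.one_closed[OF P] by blast
  then show "(D ^^ m) g \<in> P" using Sm by simp
qed


lemma hom_npow: "f \<in> hom A A \<Longrightarrow> x \<in> carrier A \<Longrightarrow> f (x [^]\<^bsub>A\<^esub> (n::nat)) = f x [^]\<^bsub>A\<^esub> n"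
  by (rule hom_nat_pow[OF _ _ AG.is_group AG.is_group])

lemma Gs_carrier: "Gs a \<subseteq> carrier A" unfolding Gs_def by blast

lemma Gs_sg: "subgroup (Gs a) A"
proof (rule AG.subgroupI)
  show "Gs a \<subseteq> carrier A" by (rule Gs_carrier)
  show "Gs a \<noteq> {}" unfolding Gs_def using AG.one_closed by auto
next
  fix x assume "x \<in> Gs a" then show "inv\<^bsub>A\<^esub> x \<in> Gs a"
    unfolding Gs_def by (simp add: AG.nat_pow_inv)
next
  fix x y assume "x \<in> Gs a" "y \<in> Gs a" then show "x \<otimes>\<^bsub>A\<^esub> y \<in> Gs a"
    unfolding Gs_def by (simp add: AG.nat_pow_distrib)
qed

lemma Ps_Gs: "Ps a \<subseteq> Gs a"
proof
  fix x assume "x \<in> Ps a"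
  then obtain y where y: "y \<in> Gs a" "x = y [^]\<^bsub>A\<^esub> p" unfolding Ps_def by blast
  have yc: "y \<in> carrier A" using y Gs_carrier by blast
  have "x [^]\<^bsub>A\<^esub> (p ^ a) = (y [^]\<^bsub>A\<^esub> (p ^ a)) [^]\<^bsub>A\<^esub> p"
    unfolding y(2) using yc by (simp add: AG.nat_pow_pow mult.commute)
  also have "\<dots> = \<one>\<^bsub>A\<^esub>" using y unfolding Gs_def by simp
  finally show "x \<in> Gs a" unfolding Gs_def using yc y by simp
qed

lemma Ps_sg: "subgroup (Ps a) A"
proof (rule AG.subgroupI)
  show "Ps a \<subseteq> carrier A" using Ps_Gs Gs_carrier by blast
  show "Ps a \<noteq> {}" unfolding Ps_def using Gs_sg subgroup.one_closed by blast
next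
  fix x assume "x \<in> Ps a"
  then obtain y where y: "y \<in> Gs a" "x = y [^]\<^bsub>A\<^esub> p" unfolding Ps_def by blast
  have yc: "y \<in> carrier A" using y Gs_carrier by blast
  have "inv\<^bsub>A\<^esub> x = (inv\<^bsub>A\<^esub> y) [^]\<^bsub>A\<^esub> p" unfolding y(2) using yc by (simp add: AG.nat_pow_inv)
  moreover have "inv\<^bsub>A\<^esub> y \<in> Gs a" using y subgroup.m_inv_closed[OF Gs_sg] by blast
  ultimately show "inv\<^bsub>A\<^esub> x \<in> Ps a" unfolding Ps_def by blast
next
  fix x x' assume "x \<in> Ps a" "x' \<in> Ps a"
  then obtain y y' where y: "y \<in> Gs a" "x = y [^]\<^bsub>A\<^esub> p" and y': "y' \<in> Gs a" "x' = y' [^]\<^bsub>A\<^esub> p"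
    unfolding Ps_def by blast
  have yc: "y \<in> carrier A" "y' \<in> carrier A" using y y' Gs_carrier by auto
  have "x \<otimes>\<^bsub>A\<^esub> x' = (y \<otimes>\<^bsub>A\<^esub> y') [^]\<^bsub>A\<^esub> p"
    unfolding y(2) y'(2) using yc by (simp add: AG.nat_pow_distrib)
  moreover have "y \<otimes>\<^bsub>A\<^esub> y' \<in> Gs a" using y y' subgroup.m_closed[OF Gs_sg] by blast
  ultimately show "x \<otimes>\<^bsub>A\<^esub> x' \<in> Ps a" unfolding Ps_def by blast
qed

lemma hom_Gs: assumes "f \<in> hom A A" "x \<in> Gs a" shows "f x \<in> Gs a"
proof -
  have xc: "x \<in> carrier A" using assms Gs_carrier by blast
  have "f x [^]\<^bsub>A\<^esub> (p ^ a) = f (x [^]\<^bsub>A\<^esub> (p ^ a))" using hom_npow[OF assms(1) xc] by simp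
  also have "\<dots> = \<one>\<^bsub>A\<^esub>" using assms(2) hom_1[OF assms(1)] unfolding Gs_def by simp
  finally show ?thesis unfolding Gs_def using hom_carr[OF assms(1) xc] by simp
qed

lemma hom_Ps: assumes "f \<in> hom A A" "x \<in> Ps a" shows "f x \<in> Ps a"
proof -
  obtain y where y: "y \<in> Gs a" "x = y [^]\<^bsub>A\<^esub> p" using assms(2) unfolding Ps_def by blast
  have "f x = f y [^]\<^bsub>A\<^esub> p" unfolding y(2) using hom_npow[OF assms(1)] y Gs_carrier by blast
  then show ?thesis unfolding Ps_def using hom_Gs[OF assms(1) y(1)] by blast
qed

lemma XminusOne: "[:0, 1:] - 1 = ([:-1, 1:] :: int poly)"
  by (simp add: one_pCons)

lemma ofnat_smult: "(of_nat n :: int poly) * s = smult (of_nat n) s"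
  by (simp add: of_nat_poly)

lemma Dpow_Ps:
  assumes hM: "M \<in> hom A A" and per: "\<And>x. x \<in> carrier A \<Longrightarrow> (M ^^ (p ^ k)) x = x"
    and g: "g \<in> Gs a"
  shows "ev M ([:-1, 1:] ^ (p ^ k)) g \<in> Ps a"
proof -
  obtain s :: "int poly" where fs: "([:0, 1:] - 1) ^ (p ^ k) + 1 = [:0, 1:] ^ (p ^ k) + of_nat p * s"
    using frob_pk[OF prime] by blast
  have gc: "g \<in> carrier A" using g Gs_carrier by blast
  let ?n = "p ^ k"
  have "ev M ([:-1, 1:] ^ ?n) g \<otimes>\<^bsub>A\<^esub> g = ev M (([:0, 1:] - 1) ^ ?n + 1) g"
    unfolding XminusOne ev_add[OF hM gc] ev_one[OF hM gc] ..
  also have "\<dots> = ev M ([:0, 1:] ^ ?n + smult (of_nat p) s) g" unfolding fs ofnat_smult ..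
  also have "\<dots> = g \<otimes>\<^bsub>A\<^esub> ev M s g [^]\<^bsub>A\<^esub> p"
    unfolding ev_add[OF hM gc] ev_smult[OF hM gc] ev_Xpow[OF hM gc] per[OF gc]
    by (simp add: int_pow_int)
  also have "\<dots> = ev M s g [^]\<^bsub>A\<^esub> p \<otimes>\<^bsub>A\<^esub> g" using gc ev_carrier[OF hM gc] by (simp add: AG.m_comm)
  finally have "ev M ([:-1, 1:] ^ ?n) g = ev M s g [^]\<^bsub>A\<^esub> p"
    using gc ev_carrier[OF hM gc] by simp
  moreover have "ev M s g \<in> Gs a" by (rule hom_Gs[OF ev_hom[OF hM] g])
  ultimately show ?thesis unfolding Ps_def by blast
qed


definition eb :: "nat \<Rightarrow> nat \<Rightarrow> int" where "eb i = (\<lambda>j. if j = i then 1 else 0)"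

lemma q_gt1: assumes i: "i < m" shows "q i > 1"
proof -
  have "int p ^ 1 \<le> int p ^ \<alpha> i" by (rule power_increasing) (use pos i p_gt1 in auto)
  then have "int p \<le> q i" unfolding q_def by (simp only: power_one_right)
  then show ?thesis using p_gt1 by linarith
qed

lemma eb_carrier: "i < m \<Longrightarrow> eb i \<in> carrier A"
  unfolding carrier_iff eb_def using q_gt1 q_pos by auto

lemma eb_Gs: assumes i: "i < m" shows "eb i \<in> Gs (\<alpha> i)"
proof -
  have "eb i \<in> Cs (ee (\<alpha> i))" unfolding Cs_def using eb_carrier[OF i] by (auto simp: eb_def ee_def)
  then show ?thesis using Gs_Cs by simp
qed

lemma hom_repr: assumes "f \<in> hom A A" "x \<in> carrier A"
  shows "f x = red (\<lambda>j. \<Sum>i<m. x i * f (eb i) j)"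
proof -
  have "red (\<lambda>j. \<Sum>i<m. x i * eb i j) = red x"
  proof (rule red_cong)
    fix j assume j: "j < m"
    have "(\<Sum>i<m. x i * eb i j) = (\<Sum>i\<in>{..<m}. if i = j then x i else 0)"
      by (rule sum.cong) (auto simp: eb_def)
    also have "\<dots> = x j" using j by simp
    finally show "(\<Sum>i<m. x i * eb i j) mod q j = x j mod q j" by simp
  qed
  then have "x = red (\<lambda>j. \<Sum>i<m. x i * eb i j)" using red_id[OF assms(2)] by simp
  then have "f x = f (red (\<lambda>j. \<Sum>i<m. x i * eb i j))" by simp
  also have "\<dots> = red (\<lambda>j. \<Sum>i<m. x i * f (eb i) j)"
    by (rule lin_sum[OF lin_hom[OF assms(1)]]) (auto intro: eb_carrier)
  finally show ?thesis .
qed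

lemma modterm: "(q'::int) dvd Q * Y \<Longrightarrow> ((c mod Q) * Y) mod q' = (c * Y) mod q'"
proof -
  assume h: "q' dvd Q * Y"
  have "(c mod Q) * Y - c * Y = - (c div Q) * (Q * Y)"
    by (simp add: minus_div_mult_eq_mod[symmetric] algebra_simps)
  then have "q' dvd (c mod Q) * Y - c * Y" using h by simp
  then show ?thesis by (simp add: mod_eq_dvd_iff)
qed

lemma main:
  assumes hM: "M \<in> hom A A" and per: "\<And>x. x \<in> carrier A \<Longrightarrow> (M ^^ (p ^ k)) x = x"
  shows "\<exists>N \<in> hom A A. \<forall>a\<in>carrier A.
           ((\<lambda>x. M x \<otimes>\<^bsub>A\<^esub> inv\<^bsub>A\<^esub> x) ^^ m) a = N a [^]\<^bsub>A\<^esub> p"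
proof -
  define D where "D = (\<lambda>x. M x \<otimes>\<^bsub>A\<^esub> inv\<^bsub>A\<^esub> x)"
  have Dhom: "D \<in> hom A A" unfolding hom_def
  proof (intro CollectI conjI ballI)
    show "D \<in> carrier A \<rightarrow> carrier A" unfolding D_def using hom_carr[OF hM] by auto
    fix x y assume x: "x \<in> carrier A" and y: "y \<in> carrier A"
    show "D (x \<otimes>\<^bsub>A\<^esub> y) = D x \<otimes>\<^bsub>A\<^esub> D y"
      unfolding D_def using x y hom_carr[OF hM] by (simp add: hom_m[OF hM] AG.inv_mult AG.m_ac)
  qed
  have Dpow: "(D ^^ j) x = ev M ([:-1, 1:] ^ j) x" if x: "x \<in> carrier A" for j x
  proof (induction j)
    case 0 then show ?case using x by (simp add: ev_one[OF hM])
  next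
    case (Suc j)
    have "(D ^^ Suc j) x = D (ev M ([:-1, 1:] ^ j) x)" using Suc by simp
    also have "\<dots> = ev M [:-1, 1:] (ev M ([:-1, 1:] ^ j) x)"
      unfolding D_def using ev_D[OF hM ev_carrier[OF hM x]] by simp
    also have "\<dots> = ev M ([:-1, 1:] ^ Suc j) x" unfolding power_Suc ev_mult[OF hM x] ..
    finally show ?case .
  qed
  have core: "(D ^^ m) (eb i) \<in> Ps (\<alpha> i)" if i: "i < m" for i
  proof -
    have a: "\<alpha> i \<ge> 1" using pos i by simp
    note cg = card_Gs_Ps[OF a]
    obtain E where E: "card (Gs (\<alpha> i)) = p ^ E" using cg(3) by blast
    show ?thesis
    proof (rule chain[OF Dhom Gs_sg Ps_sg Ps_Gs _ _ _ cg(1) cg(2) E])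
      show "D g \<in> Gs (\<alpha> i)" if "g \<in> Gs (\<alpha> i)" for g by (rule hom_Gs[OF Dhom that])
      show "D v \<in> Ps (\<alpha> i)" if "v \<in> Ps (\<alpha> i)" for v by (rule hom_Ps[OF Dhom that])
      show "(D ^^ (p ^ k)) g \<in> Ps (\<alpha> i)" if "g \<in> Gs (\<alpha> i)" for g
      proof -
        have "g \<in> carrier A" using that Gs_carrier by blast
        then show ?thesis using Dpow[of g "p ^ k"] Dpow_Ps[OF hM per that] by simp
      qed
      show "eb i \<in> Gs (\<alpha> i)" by (rule eb_Gs[OF i])
    qed
  qed
  define Y where "Y i = (SOME y. y \<in> Gs (\<alpha> i) \<and> y [^]\<^bsub>A\<^esub> p = (D ^^ m) (eb i))" for i
  have Y: "Y i \<in> Gs (\<alpha> i) \<and> Y i [^]\<^bsub>A\<^esub> p = (D ^^ m) (eb i)" if "i < m" for i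
  proof -
    have "\<exists>y. y \<in> Gs (\<alpha> i) \<and> y [^]\<^bsub>A\<^esub> p = (D ^^ m) (eb i)"
      using core[OF that] unfolding Ps_def by auto
    then show ?thesis unfolding Y_def by (rule someI_ex)
  qed
  have Yc: "Y i \<in> carrier A" if "i < m" for i using Y[OF that] Gs_carrier by blast
  have Ydvd: "q j dvd q i * Y i j" if "i < m" "j < m" for i j
    using Gs_dvd[of "Y i" "\<alpha> i" j] Y[OF that(1)] that(2) unfolding q_def by simp
  define N where "N x = red (\<lambda>j. \<Sum>i<m. x i * Y i j)" for x
  have Nhom: "N \<in> hom A A" unfolding hom_def
  proof (intro CollectI conjI ballI)
    show "N \<in> carrier A \<rightarrow> carrier A" unfolding N_def by simp
    fix x y assume x: "x \<in> carrier A" and y: "y \<in> carrier A"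
    show "N (x \<otimes>\<^bsub>A\<^esub> y) = N x \<otimes>\<^bsub>A\<^esub> N y"
      unfolding N_def mult_eq
    proof (rule red_cong)
      fix j assume j: "j < m"
      have "(\<Sum>i<m. red (\<lambda>i. x i + y i) i * Y i j) mod q j
          = (\<Sum>i<m. (red (\<lambda>i. x i + y i) i * Y i j) mod q j) mod q j" by (simp add: mod_sum_eq)
      also have "\<dots> = (\<Sum>i<m. ((x i + y i) * Y i j) mod q j) mod q j"
      proof (rule arg_cong[where f = "\<lambda>t. t mod q j"], rule sum.cong)
        fix i assume "i \<in> {..<m}"
        then have i: "i < m" by simp
        show "(red (\<lambda>i. x i + y i) i * Y i j) mod q j = ((x i + y i) * Y i j) mod q j"
          using modterm[OF Ydvd[OF i j]] i by (simp add: red_def)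
      qed simp
      also have "\<dots> = (\<Sum>i<m. x i * Y i j + y i * Y i j) mod q j"
        by (simp add: mod_sum_eq distrib_right)
      also have "\<dots> = ((\<Sum>i<m. x i * Y i j) + (\<Sum>i<m. y i * Y i j)) mod q j"
        by (simp add: sum.distrib)
      also have "\<dots> = (red (\<lambda>j. \<Sum>i<m. x i * Y i j) j + red (\<lambda>j. \<Sum>i<m. y i * Y i j) j) mod q j"
        using j by simp
      finally show "(\<Sum>i<m. red (\<lambda>i. x i + y i) i * Y i j) mod q j =
          (red (\<lambda>j. \<Sum>i<m. x i * Y i j) j + red (\<lambda>j. \<Sum>i<m. y i * Y i j) j) mod q j" .
    qed
  qed
  have "((\<lambda>x. M x \<otimes>\<^bsub>A\<^esub> inv\<^bsub>A\<^esub> x) ^^ m) x = N x [^]\<^bsub>A\<^esub> p" if x: "x \<in> carrier A" for x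
  proof -
    have "(D ^^ m) x = red (\<lambda>j. \<Sum>i<m. x i * (D ^^ m) (eb i) j)"
      by (rule hom_repr[OF funpow_hom[OF Dhom] x])
    also have "\<dots> = red (\<lambda>j. \<Sum>i<m. x i * red (\<lambda>j. int p * Y i j) j)"
    proof (rule arg_cong[where f = red], rule ext, rule sum.cong)
      fix j i assume "i \<in> {..<m}"
      then have i: "i < m" by simp
      show "x i * (D ^^ m) (eb i) j = x i * red (\<lambda>j. int p * Y i j) j"
        using Y[OF i] pow_eq[OF Yc[OF i], of p] by simp
    qed simp
    also have "\<dots> = red (\<lambda>j. int p * N x j)"
    proof (rule red_cong)
      fix j assume j: "j < m"
      have "(\<Sum>i<m. x i * red (\<lambda>j. int p * Y i j) j) mod q j
          = (\<Sum>i<m. (x i * red (\<lambda>j. int p * Y i j) j) mod q j) mod q j" by (simp add: mod_sum_eq)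
      also have "\<dots> = (\<Sum>i<m. (x i * (int p * Y i j)) mod q j) mod q j"
        using j by simp
      also have "\<dots> = (int p * (\<Sum>i<m. x i * Y i j)) mod q j"
        by (simp add: mod_sum_eq sum_distrib_left mult_ac)
      also have "\<dots> = (int p * N x j) mod q j" unfolding N_def using j by simp
      finally show "(\<Sum>i<m. x i * red (\<lambda>j. int p * Y i j) j) mod q j = (int p * N x j) mod q j" .
    qed
    also have "\<dots> = N x [^]\<^bsub>A\<^esub> p" by (rule pow_eq[symmetric]) (simp add: N_def)
    finally show ?thesis unfolding D_def .
  qed
  then show ?thesis using Nhom by blast
qed

end

theorem lemma2p7:
  fixes p m :: nat and \<alpha> :: "nat \<Rightarrow> nat" and M :: "(nat \<Rightarrow> int) \<Rightarrow> (nat \<Rightarrow> int)"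
  defines "A \<equiv> cyc_prod p \<alpha> m"
  assumes "prime p"
    and "\<forall>i<m. 1 \<le> \<alpha> i"
    and "\<forall>i j. i \<le> j \<and> j < m \<longrightarrow> \<alpha> i \<le> \<alpha> j"
    and "M \<in> hom A A" and "bij_betw M (carrier A) (carrier A)"
    and "\<exists>k. \<forall>a\<in>carrier A. (M ^^ (p ^ k)) a = a"
  shows "\<exists>N \<in> hom A A. \<forall>a\<in>carrier A.
           ((\<lambda>x. M x \<otimes>\<^bsub>A\<^esub> inv\<^bsub>A\<^esub> x) ^^ m) a = N a [^]\<^bsub>A\<^esub> p"
proof -
  interpret cp p m \<alpha> using assms(2,3) by unfold_locales auto
  obtain k where k: "\<forall>a\<in>carrier A. (M ^^ (p ^ k)) a = a" using assms(7) by blast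
  show ?thesis unfolding A_def
    by (rule main[of M k]) (use assms(5) k in \<open>auto simp: A_def\<close>)
qed

end
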